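(* For every positive integer $k$, $NPO(k)$ is well defined (finite) and $NPO(k) \le R(k,k+1)$.
   Context: All graphs are finite, simple and undirected; $A(G)$ denotes the adjacency matrix of $G$. Eigenvalues are counted with multiplicity. For a positive integer $k$, $NPO(k)$ is the smallest integer $n$ such that the adjacency matrix of every graph with at least $n$ vertices has at least $k$ nonpositive eigenvalues. The Ramsey number $R(m,n)$ is the minimum number $N$ such that every graph on at least $N$ vertices has either an independent set of size $m$ or an induced subgraph isomorphic to the complete graph $K_n$. *)

theory Defs
  imports "Jordan_Normal_Form.Char_Poly"
begin

text \<open>A finite simple graph on the vertex set {0..<n}, given by a symmetric irreflexive
  adjacency relation (only its values on {0..<n} matter).\<close>
definition simple_graph :: "nat \<Rightarrow> (nat \<Rightarrow> nat \<Rightarrow> bool) \<Rightarrow> bool" where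
  "simple_graph n E \<longleftrightarrow> (\<forall>i<n. \<forall>j<n. E i j = E j i) \<and> (\<forall>i<n. \<not> E i i)"

definition adj_matrix :: "nat \<Rightarrow> (nat \<Rightarrow> nat \<Rightarrow> bool) \<Rightarrow> real mat" where
  "adj_matrix n E = mat n n (\<lambda>(i, j). if E i j then 1 else 0)"

definition num_nonpos_eigenvalues :: "real mat \<Rightarrow> nat" where
  "num_nonpos_eigenvalues A =
     (\<Sum>a\<in>{a. eigenvalue A a \<and> a \<le> 0}. order a (char_poly A))"

definition NPO_prop :: "nat \<Rightarrow> nat \<Rightarrow> bool" where
  "NPO_prop k n \<longleftrightarrow> (\<forall>m\<ge>n. \<forall>E. simple_graph m E \<longrightarrow> k \<le> num_nonpos_eigenvalues (adj_matrix m E))"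

definition NPO :: "nat \<Rightarrow> nat" where
  "NPO k = (LEAST n. NPO_prop k n)"

definition independent_set :: "nat \<Rightarrow> (nat \<Rightarrow> nat \<Rightarrow> bool) \<Rightarrow> nat set \<Rightarrow> bool" where
  "independent_set n E S \<longleftrightarrow> S \<subseteq> {0..<n} \<and> (\<forall>i\<in>S. \<forall>j\<in>S. \<not> E i j)"

definition clique :: "nat \<Rightarrow> (nat \<Rightarrow> nat \<Rightarrow> bool) \<Rightarrow> nat set \<Rightarrow> bool" where
  "clique n E S \<longleftrightarrow> S \<subseteq> {0..<n} \<and> (\<forall>i\<in>S. \<forall>j\<in>S. i \<noteq> j \<longrightarrow> E i j)"

definition ramsey_prop :: "nat \<Rightarrow> nat \<Rightarrow> nat \<Rightarrow> bool" where
  "ramsey_prop s t N \<longleftrightarrow> (\<forall>m\<ge>N. \<forall>E. simple_graph m E \<longrightarrow>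
      (\<exists>S. independent_set m E S \<and> card S = s) \<or> (\<exists>S. clique m E S \<and> card S = t))"

definition ramsey_number :: "nat \<Rightarrow> nat \<Rightarrow> nat" where
  "ramsey_number s t = (LEAST N. ramsey_prop s t N)"

end

theory Submission
  imports Defs "HOL-Library.Ramsey" "HOL-Computational_Algebra.Fundamental_Theorem_Algebra"
begin

definition orthonormal :: "nat \<Rightarrow> real vec list \<Rightarrow> bool" where
  "orthonormal n ws \<longleftrightarrow> set ws \<subseteq> carrier_vec n \<and>
     (\<forall>i<length ws. \<forall>j<length ws. ws!i \<bullet> ws!j = (if i = j then 1 else 0))"

lemma exists_orth:
  fixes rs :: "'a :: field vec list"
  assumes rs: "set rs \<subseteq> carrier_vec n" and len: "length rs < n"
  shows "\<exists>x\<in>carrier_vec n. x \<noteq> 0\<^sub>v n \<and> (\<forall>r\<in>set rs. r \<bullet> x = 0)"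
proof -
  define c where "c i = (if i < length rs then rs!i else 0\<^sub>v n)" for i
  define M where "M = mat\<^sub>r n n (\<lambda>i. if i = n - 1 then 0\<^sub>v n else c i)"
  have cc: "c \<in> {0..<n} \<rightarrow> carrier_vec n" using rs nth_mem unfolding c_def by fastforce
  have "det M = 0" unfolding M_def by (rule det_row_0, insert len cc, auto)
  moreover have M: "M \<in> carrier_mat n n" unfolding M_def by auto
  ultimately obtain v where v: "v \<in> carrier_vec n" "v \<noteq> 0\<^sub>v n" "M *\<^sub>v v = 0\<^sub>v n"
    using det_0_iff_vec_prod_zero_field[OF M] by auto
  have "r \<bullet> v = 0" if r: "r \<in> set rs" for r
  proof -
    from r obtain i where i: "i < length rs" "r = rs ! i" by (auto simp: in_set_conv_nth)
    have m0: "(M *\<^sub>v v) $ i = 0" using v i len by auto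
    have ri: "rs ! i \<in> carrier_vec n" using rs nth_mem[OF i(1)] by auto
    moreover have "row M i = r" unfolding M_def c_def using i len ri
      by (subst row_mat_of_row_fun, auto)
    ultimately show ?thesis using i len M m0 by auto
  qed
  with v show ?thesis by blast
qed

lemma scalar_prod_mat_vec_transpose:
  fixes A :: "'a :: comm_semiring_0 mat"
  assumes A: "A \<in> carrier_mat n m" and x: "x \<in> carrier_vec n" and y: "y \<in> carrier_vec m"
  shows "x \<bullet> (A *\<^sub>v y) = (A\<^sup>T *\<^sub>v x) \<bullet> y"
proof -
  have "x \<bullet> (A *\<^sub>v y) = (\<Sum>i<n. x $ i * (\<Sum>j<m. A $$ (i,j) * y $ j))"
    using A x y by (auto simp: scalar_prod_def mult_mat_vec_def row_def atLeast0LessThan)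
  also have "\<dots> = (\<Sum>i<n. \<Sum>j<m. x $ i * A $$ (i,j) * y $ j)"
    by (simp add: sum_distrib_left mult.assoc)
  also have "\<dots> = (\<Sum>j<m. \<Sum>i<n. x $ i * A $$ (i,j) * y $ j)"
    by (rule sum.swap)
  also have "\<dots> = (\<Sum>j<m. (\<Sum>i<n. A $$ (i,j) * x $ i) * y $ j)"
    unfolding sum_distrib_right by (rule sum.cong[OF refl], rule sum.cong[OF refl], simp add: mult_ac)
  also have "\<dots> = (A\<^sup>T *\<^sub>v x) \<bullet> y"
    using A x y by (auto simp: scalar_prod_def mult_mat_vec_def row_def atLeast0LessThan col_def)
  finally show ?thesis .
qed

lemma self_scalar_pos:
  fixes x :: "real vec"
  assumes x: "x \<in> carrier_vec n" "x \<noteq> 0\<^sub>v n"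
  shows "x \<bullet> x > 0"
proof -
  from x obtain i where i: "i < n" "x $ i \<noteq> 0"
    by (metis carrier_vecD eq_vecI index_zero_vec(1) index_zero_vec(2))
  have "x \<bullet> x = (\<Sum>j\<in>{0..<n}. x $ j * x $ j)" using x by (simp add: scalar_prod_def)
  also have "\<dots> > 0"
    by (rule sum_pos2[of _ i], insert i, auto simp: zero_less_mult_iff)
  finally show ?thesis .
qed

lemma orthonormal_extend:
  assumes o: "orthonormal n ws" and len: "length ws < n"
  shows "\<exists>u. orthonormal n (ws @ [u])"
proof -
  from o have ws: "set ws \<subseteq> carrier_vec n" unfolding orthonormal_def by auto
  from exists_orth[OF ws len] obtain x where x: "x \<in> carrier_vec n" "x \<noteq> 0\<^sub>v n"
    and orth: "\<forall>r\<in>set ws. r \<bullet> x = 0" by auto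
  define c where "c = x \<bullet> x"
  have c: "c > 0" unfolding c_def using self_scalar_pos[OF x] .
  define u where "u = (1 / sqrt c) \<cdot>\<^sub>v x"
  have u: "u \<in> carrier_vec n" unfolding u_def using x by auto
  have uu: "u \<bullet> u = 1" unfolding u_def using x c
    by (simp add: c_def[symmetric] real_sqrt_mult[symmetric] )
  have wu: "w \<bullet> u = 0" "u \<bullet> w = 0" if w: "w \<in> set ws" for w
  proof -
    have wc: "w \<in> carrier_vec n" using w ws by auto
    show "w \<bullet> u = 0" unfolding u_def using orth w wc x by simp
    thus "u \<bullet> w = 0" using comm_scalar_prod[OF wc u] by simp
  qed
  show ?thesis unfolding orthonormal_def
  proof (intro exI[of _ u] conjI allI impI)
    show "set (ws @ [u]) \<subseteq> carrier_vec n" using ws u by auto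
    fix i j assume i: "i < length (ws @ [u])" and j: "j < length (ws @ [u])"
    show "(ws @ [u]) ! i \<bullet> (ws @ [u]) ! j = (if i = j then 1 else 0)"
    proof (cases "i < length ws")
      case True note i' = this
      show ?thesis
      proof (cases "j < length ws")
        case True with i' o show ?thesis unfolding orthonormal_def by (auto simp: nth_append)
      next
        case False with j have "j = length ws" by auto
        with i' wu show ?thesis by (auto simp: nth_append)
      qed
    next
      case False with i have i': "i = length ws" by auto
      show ?thesis
      proof (cases "j < length ws")
        case True with i' wu show ?thesis by (auto simp: nth_append)
      next
        case False with j have "j = length ws" by auto
        with i' uu show ?thesis by (auto simp: nth_append)
      qed
    qed
  qed
qed

lemma orthonormal_complete:
  assumes "orthonormal n ws" "length ws \<le> n"
  shows "\<exists>us. orthonormal n (ws @ us) \<and> length (ws @ us) = n"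
  using assms
proof (induction "n - length ws" arbitrary: ws)
  case 0 thus ?case by (intro exI[of _ "[]"], auto)
next
  case (Suc d)
  have "length ws < n" using Suc.hyps(2) by linarith
  from orthonormal_extend[OF Suc.prems(1) this] obtain u where
    u: "orthonormal n (ws @ [u])" by auto
   have "d = n - length (ws @ [u])" "length (ws @ [u]) \<le> n" using Suc.hyps(2) by auto
  from Suc.hyps(1)[OF this(1) u this(2)] obtain us where
    "orthonormal n (ws @ [u] @ us) \<and> length (ws @ [u] @ us) = n" by auto
  thus ?case by (intro exI[of _ "u # us"], auto)
qed

lemma orthonormal_square:
  assumes o: "orthonormal n ps" and len: "length ps = n"
  shows "(mat_of_cols n ps)\<^sup>T * mat_of_cols n ps = 1\<^sub>m n"
    and "mat_of_cols n ps * (mat_of_cols n ps)\<^sup>T = 1\<^sub>m n"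
proof -
  have ps: "set ps \<subseteq> carrier_vec n" using o unfolding orthonormal_def by auto
  have pc: "ps ! i \<in> carrier_vec n" if "i < n" for i using ps nth_mem[of i ps] that len by auto
  show 1: "(mat_of_cols n ps)\<^sup>T * mat_of_cols n ps = 1\<^sub>m n"
    unfolding transpose_mat_of_cols
  proof (rule eq_matI)
    fix i j assume i: "i < dim_row (1\<^sub>m n)" and j: "j < dim_col (1\<^sub>m n)"
    hence "(mat_of_rows n ps * mat_of_cols n ps) $$ (i, j) = ps ! i \<bullet> ps ! j"
      using len pc by auto
    thus "(mat_of_rows n ps * mat_of_cols n ps) $$ (i, j) = 1\<^sub>m n $$ (i, j)"
      using o i j len unfolding orthonormal_def by auto
  qed (insert len, auto)
  show "mat_of_cols n ps * (mat_of_cols n ps)\<^sup>T = 1\<^sub>m n"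
    by (rule mat_mult_left_right_inverse[OF _ _ 1], insert len, auto)
qed

lemma orthonormal_zero:
  assumes o: "orthonormal n ps" and len: "length ps = n" and z: "z \<in> carrier_vec n"
    and orth: "\<forall>p\<in>set ps. p \<bullet> z = 0"
  shows "z = 0\<^sub>v n"
proof -
  define P where "P = mat_of_cols n ps"
  have ps: "set ps \<subseteq> carrier_vec n" using o unfolding orthonormal_def by auto
  have P: "P \<in> carrier_mat n n" unfolding P_def using len by auto
  have "P\<^sup>T *\<^sub>v z = 0\<^sub>v n"
  proof (rule eq_vecI)
    fix i assume "i < dim_vec (0\<^sub>v n :: real vec)"
    hence i: "i < n" by auto
    have pc: "ps ! i \<in> carrier_vec n" using ps nth_mem[of i ps] i len by auto
    have "(P\<^sup>T *\<^sub>v z) $ i = ps ! i \<bullet> z" unfolding P_def transpose_mat_of_cols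
      using i len pc by auto
    also have "\<dots> = 0" using orth nth_mem[of i ps] i len by auto
    finally show "(P\<^sup>T *\<^sub>v z) $ i = 0\<^sub>v n $ i" using i by simp
  qed (insert P, auto)
  hence "P *\<^sub>v (P\<^sup>T *\<^sub>v z) = 0\<^sub>v n" using P by auto
  also have "P *\<^sub>v (P\<^sup>T *\<^sub>v z) = (P * P\<^sup>T) *\<^sub>v z" using P z by auto
  also have "P * P\<^sup>T = 1\<^sub>m n" unfolding P_def by (rule orthonormal_square[OF o len])
  finally show ?thesis using z by auto
qed

lemma real_eigen_exists:
  fixes A :: "real mat"
  assumes A: "A \<in> carrier_mat n n" and sym: "A\<^sup>T = A" and n: "n > 0"
  shows "\<exists>e v. v \<in> carrier_vec n \<and> v \<noteq> 0\<^sub>v n \<and> A *\<^sub>v v = e \<cdot>\<^sub>v v"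
proof -
  define Ac where "Ac = map_mat complex_of_real A"
  have Ac: "Ac \<in> carrier_mat n n" unfolding Ac_def using A by auto
  have cp: "char_poly Ac = map_poly of_real (char_poly A)"
    unfolding Ac_def by (rule of_real_hom.char_poly_hom[OF A])
  have "degree (char_poly Ac) = n" using degree_monic_char_poly[OF Ac] by auto
  hence "\<not> constant (poly (char_poly Ac))" using n by (simp add: constant_degree)
  from fundamental_theorem_of_algebra[OF this] obtain a where a: "poly (char_poly Ac) a = 0" by auto
  hence "eigenvalue Ac a" using eigenvalue_root_char_poly[OF Ac] by auto
  then obtain v where v: "v \<in> carrier_vec n" "v \<noteq> 0\<^sub>v n" "Ac *\<^sub>v v = a \<cdot>\<^sub>v v"
    unfolding eigenvalue_def eigenvector_def using Ac by auto
  have symi: "A $$ (i,j) = A $$ (j,i)" if "i < n" "j < n" for i j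
    using arg_cong[OF sym, of "\<lambda>M. M $$ (i,j)"] that A by auto
  define s where "s = (\<Sum>i<n. cnj (v $ i) * (Ac *\<^sub>v v) $ i)"
  have s1: "s = (\<Sum>i<n. \<Sum>j<n. cnj (v $ i) * of_real (A $$ (i,j)) * v $ j)"
    unfolding s_def using v(1) A
    by (auto simp: Ac_def mult_mat_vec_def scalar_prod_def row_def sum_distrib_left atLeast0LessThan mult.assoc intro!: sum.cong)
  have "cnj s = (\<Sum>i<n. \<Sum>j<n. v $ i * of_real (A $$ (i,j)) * cnj (v $ j))"
    unfolding s1 cnj_sum by simp
  also have "\<dots> = (\<Sum>j<n. \<Sum>i<n. v $ i * of_real (A $$ (i,j)) * cnj (v $ j))"
    by (rule sum.swap)
  also have "\<dots> = s" unfolding s1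
    by (rule sum.cong[OF refl], rule sum.cong[OF refl], auto simp: symi)
  finally have "Im s = 0" by (metis cnj.sel(2) neg_equal_zero)
  define r where "r = (\<Sum>i<n. (cmod (v $ i))^2)"
  have cn: "cnj z * z = of_real ((cmod z)^2)" for z
    using complex_norm_square[of z] by (simp add: mult.commute)
  have cn2: "z * cnj z = (complex_of_real (cmod z))^2" for z
    using complex_norm_square[of z] by simp
  have s2: "s = a * of_real r"
    unfolding s_def r_def using v
    by (auto simp: sum_distrib_left cn2 mult_ac intro!: sum.cong)
  obtain i where i: "i < n" "v $ i \<noteq> 0"
    using v by (metis carrier_vecD eq_vecI index_zero_vec(1) index_zero_vec(2))
  have "r > 0" unfolding r_def
    by (rule sum_pos2[of _ i], insert i, auto)
  with \<open>Im s = 0\<close> s2 have "Im a = 0" by auto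
  hence a2: "a = of_real (Re a)" by (simp add: complex_eq_iff)
  have "of_real (poly (char_poly A) (Re a)) = (0 :: complex)"
    using a unfolding cp by (subst (asm) a2, simp add: of_real_hom.poly_map_poly)
  hence "poly (char_poly A) (Re a) = 0" by simp
  hence "eigenvalue A (Re a)" using eigenvalue_root_char_poly[OF A] by auto
  thus ?thesis unfolding eigenvalue_def eigenvector_def using A by auto
qed

lemma spectral:
  fixes A :: "real mat"
  assumes "A \<in> carrier_mat n n" "A\<^sup>T = A"
  shows "\<exists>vs es. orthonormal n vs \<and> length vs = n \<and> length es = n \<and>
     (\<forall>i<n. A *\<^sub>v (vs ! i) = (es ! i) \<cdot>\<^sub>v (vs ! i))"
  using assms
proof (induction n arbitrary: A)
  case 0 thus ?case by (intro exI[of _ "[]"], auto simp: orthonormal_def)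
next
  case (Suc n A)
  note A = Suc.prems(1) and sym = Suc.prems(2)
  obtain e x where x: "x \<in> carrier_vec (Suc n)" "x \<noteq> 0\<^sub>v (Suc n)" "A *\<^sub>v x = e \<cdot>\<^sub>v x"
    using real_eigen_exists[OF A sym] by auto
  define c where "c = x \<bullet> x"
  have c: "c > 0" unfolding c_def using self_scalar_pos[OF x(1-2)] .
  define u where "u = (1 / sqrt c) \<cdot>\<^sub>v x"
  have u: "u \<in> carrier_vec (Suc n)" unfolding u_def using x by auto
  have uu: "u \<bullet> u = 1" unfolding u_def using x c
    by (simp add: c_def[symmetric] real_sqrt_mult[symmetric])
  have Au: "A *\<^sub>v u = e \<cdot>\<^sub>v u" unfolding u_def using x A
    by (simp add: mult_mat_vec[OF A] smult_smult_assoc mult.commute)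
  have "orthonormal (Suc n) [u]" using u uu unfolding orthonormal_def by auto
  from orthonormal_complete[OF this] obtain ws where
    ows: "orthonormal (Suc n) (u # ws)" and lws: "length ws = n" by auto
  have wsc: "set ws \<subseteq> carrier_vec (Suc n)" using ows unfolding orthonormal_def by auto
  have wsi: "ws ! i \<in> carrier_vec (Suc n)" if "i < n" for i using wsc nth_mem[of i ws] that lws by auto
  have orthi: "ws ! i \<bullet> ws ! j = (if i = j then 1 else 0)" if "i < n" "j < n" for i j
  proof -
    have "(u # ws) ! Suc i \<bullet> (u # ws) ! Suc j = (if Suc i = Suc j then 1 else 0)"
      using ows that lws unfolding orthonormal_def by (metis length_Cons Suc_less_eq)
    thus ?thesis by simp
  qed
  have orthu: "ws ! i \<bullet> u = 0" if "i < n" for i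
  proof -
    have "(u # ws) ! Suc i \<bullet> (u # ws) ! 0 = (if Suc i = 0 then 1 else 0)"
      using ows that lws unfolding orthonormal_def by (metis length_Cons Suc_less_eq zero_less_Suc)
    thus ?thesis by simp
  qed
  define Q where "Q = mat_of_cols (Suc n) ws"
  have Q: "Q \<in> carrier_mat (Suc n) n" unfolding Q_def using lws by auto
  have QTQ: "Q\<^sup>T * Q = 1\<^sub>m n"
  proof (rule eq_matI)
    fix i j assume "i < dim_row (1\<^sub>m n)" "j < dim_col (1\<^sub>m n)"
    hence ij: "i < n" "j < n" by auto
    have "(Q\<^sup>T * Q) $$ (i, j) = ws ! i \<bullet> ws ! j" unfolding Q_def transpose_mat_of_cols
      using ij lws wsi by auto
    thus "(Q\<^sup>T * Q) $$ (i, j) = 1\<^sub>m n $$ (i, j)" using orthi ij by auto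
  qed (insert Q, auto)
  have QTu: "Q\<^sup>T *\<^sub>v u = 0\<^sub>v n"
  proof (rule eq_vecI)
    fix i assume "i < dim_vec (0\<^sub>v n :: real vec)"
    hence i: "i < n" by auto
    have "(Q\<^sup>T *\<^sub>v u) $ i = ws ! i \<bullet> u" unfolding Q_def transpose_mat_of_cols
      using i lws wsi by auto
    thus "(Q\<^sup>T *\<^sub>v u) $ i = 0\<^sub>v n $ i" using orthu i by auto
  qed (insert Q, auto)
  define B where "B = Q\<^sup>T * A * Q"
  have B: "B \<in> carrier_mat n n" unfolding B_def using Q A by auto
  have symB: "B\<^sup>T = B" unfolding B_def
    by (subst transpose_mult[of _ n "Suc n" _ n], insert Q A, auto simp: transpose_mult[OF _ A] sym)
  from Suc.IH[OF B symB] obtain ys fs where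
    oys: "orthonormal n ys" and lys: "length ys = n" and lfs: "length fs = n"
    and eig: "\<forall>i<n. B *\<^sub>v ys ! i = fs ! i \<cdot>\<^sub>v ys ! i" by auto
  have ysc: "set ys \<subseteq> carrier_vec n" using oys unfolding orthonormal_def by auto
  have ysi: "ys ! i \<in> carrier_vec n" if "i < n" for i using ysc nth_mem[of i ys] that lys by auto
  have Qprod: "(Q *\<^sub>v y) \<bullet> (Q *\<^sub>v y') = y \<bullet> y'" if "y \<in> carrier_vec n" "y' \<in> carrier_vec n" for y y'
  proof -
    have "(Q *\<^sub>v y) \<bullet> (Q *\<^sub>v y') = (Q\<^sup>T *\<^sub>v (Q *\<^sub>v y)) \<bullet> y'"
      by (rule scalar_prod_mat_vec_transpose[OF Q _ that(2)], insert Q that, auto)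
    also have "Q\<^sup>T *\<^sub>v (Q *\<^sub>v y) = y" using that Q
      by (subst assoc_mult_mat_vec[symmetric, of _ n "Suc n" _ n], auto simp: QTQ)
    finally show ?thesis .
  qed
  have uQ: "u \<bullet> (Q *\<^sub>v y) = 0" if "y \<in> carrier_vec n" for y
  proof -
    have "u \<bullet> (Q *\<^sub>v y) = (Q\<^sup>T *\<^sub>v u) \<bullet> y"
      by (rule scalar_prod_mat_vec_transpose[OF Q u that])
    thus ?thesis using QTu that by simp
  qed
  have Qu: "(Q *\<^sub>v y) \<bullet> u = 0" if "y \<in> carrier_vec n" for y
    using uQ[OF that] comm_scalar_prod[OF u, of "Q *\<^sub>v y"] Q that by auto
  have eigQ: "A *\<^sub>v (Q *\<^sub>v y) = f \<cdot>\<^sub>v (Q *\<^sub>v y)" if y: "y \<in> carrier_vec n" and By: "B *\<^sub>v y = f \<cdot>\<^sub>v y" for y f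
  proof -
    define z where "z = A *\<^sub>v (Q *\<^sub>v y) - f \<cdot>\<^sub>v (Q *\<^sub>v y)"
    have Qy: "Q *\<^sub>v y \<in> carrier_vec (Suc n)" using Q y by auto
    have AQy: "A *\<^sub>v (Q *\<^sub>v y) \<in> carrier_vec (Suc n)" using A Qy by auto
    have z: "z \<in> carrier_vec (Suc n)" unfolding z_def using AQy Qy by auto
    have "u \<bullet> z = u \<bullet> (A *\<^sub>v (Q *\<^sub>v y)) - u \<bullet> (f \<cdot>\<^sub>v (Q *\<^sub>v y))"
      unfolding z_def by (rule scalar_prod_minus_distrib[OF u AQy], insert Qy, auto)
    also have "u \<bullet> (A *\<^sub>v (Q *\<^sub>v y)) = (A\<^sup>T *\<^sub>v u) \<bullet> (Q *\<^sub>v y)"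
      by (rule scalar_prod_mat_vec_transpose[OF A u Qy])
    also have "\<dots> = e * (u \<bullet> (Q *\<^sub>v y))" unfolding sym Au using u Qy by simp
    also have "u \<bullet> (f \<cdot>\<^sub>v (Q *\<^sub>v y)) = f * (u \<bullet> (Q *\<^sub>v y))" using u Qy by simp
    finally have uz: "u \<bullet> z = 0" using uQ[OF y] by simp
    have "Q\<^sup>T *\<^sub>v z = Q\<^sup>T *\<^sub>v (A *\<^sub>v (Q *\<^sub>v y)) - Q\<^sup>T *\<^sub>v (f \<cdot>\<^sub>v (Q *\<^sub>v y))"
      unfolding z_def by (rule mult_minus_distrib_mat_vec[of _ n "Suc n"], insert Q AQy Qy, auto)
    also have "Q\<^sup>T *\<^sub>v (A *\<^sub>v (Q *\<^sub>v y)) = B *\<^sub>v y"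
    proof -
      have "B *\<^sub>v y = (Q\<^sup>T * A) *\<^sub>v (Q *\<^sub>v y)" unfolding B_def
        by (rule assoc_mult_mat_vec[of _ n "Suc n"], insert Q A y, auto)
      also have "\<dots> = Q\<^sup>T *\<^sub>v (A *\<^sub>v (Q *\<^sub>v y))"
        by (rule assoc_mult_mat_vec[of _ n "Suc n"], insert Q A Qy, auto)
      finally show ?thesis by simp
    qed
    also have "Q\<^sup>T *\<^sub>v (f \<cdot>\<^sub>v (Q *\<^sub>v y)) = f \<cdot>\<^sub>v y"
    proof -
      have "Q\<^sup>T *\<^sub>v (f \<cdot>\<^sub>v (Q *\<^sub>v y)) = f \<cdot>\<^sub>v (Q\<^sup>T *\<^sub>v (Q *\<^sub>v y))"
        by (rule mult_mat_vec[of _ n "Suc n"], insert Q Qy, auto)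
      also have "Q\<^sup>T *\<^sub>v (Q *\<^sub>v y) = (Q\<^sup>T * Q) *\<^sub>v y"
        by (rule assoc_mult_mat_vec[symmetric, of _ n "Suc n"], insert Q y, auto)
      finally show ?thesis using QTQ y by simp
    qed
    also have "B *\<^sub>v y - f \<cdot>\<^sub>v y = 0\<^sub>v n" unfolding By by (rule minus_cancel_vec, insert y, auto)
    finally have QTz: "Q\<^sup>T *\<^sub>v z = 0\<^sub>v n" .
    have "z = 0\<^sub>v (Suc n)"
    proof (rule orthonormal_zero[OF ows _ z])
      show "length (u # ws) = Suc n" using lws by simp
      show "\<forall>p\<in>set (u # ws). p \<bullet> z = 0"
      proof
        fix p assume "p \<in> set (u # ws)"
        then consider "p = u" | i where "i < n" "p = ws ! i" using lws by (auto simp: in_set_conv_nth)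
        thus "p \<bullet> z = 0"
        proof cases
          case 1 thus ?thesis using uz by simp
        next
          case (2 i)
          have "(Q\<^sup>T *\<^sub>v z) $ i = ws ! i \<bullet> z" unfolding Q_def transpose_mat_of_cols
            using 2 lws wsi z by auto
          thus ?thesis using QTz 2 by auto
        qed
      qed
    qed
    hence zi: "z $ i = 0" if "i < Suc n" for i using that by simp
    show ?thesis
    proof (rule eq_vecI)
      fix i assume "i < dim_vec (f \<cdot>\<^sub>v (Q *\<^sub>v y))"
      hence i: "i < Suc n" using Q by auto
      from zi[OF i] show "(A *\<^sub>v (Q *\<^sub>v y)) $ i = (f \<cdot>\<^sub>v (Q *\<^sub>v y)) $ i"
        unfolding z_def using i A Q by auto
    qed (insert A Q, auto)
  qed
  define vs where "vs = u # map (\<lambda>y. Q *\<^sub>v y) ys"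
  define es where "es = e # fs"
  show ?case
  proof (intro exI[of _ vs] exI[of _ es] conjI allI impI)
    show "length vs = Suc n" "length es = Suc n" unfolding vs_def es_def using lys lfs by auto
    fix i assume i: "i < Suc n"
    show "A *\<^sub>v vs ! i = es ! i \<cdot>\<^sub>v vs ! i"
    proof (cases i)
      case 0 thus ?thesis unfolding vs_def es_def using Au by simp
    next
      case (Suc j) with i have j: "j < n" by auto
      thus ?thesis unfolding vs_def es_def Suc using lys eigQ[OF ysi[OF j]] eig by auto
    qed
  next
    show "orthonormal (Suc n) vs" unfolding orthonormal_def
    proof (intro conjI allI impI)
      show "set vs \<subseteq> carrier_vec (Suc n)" unfolding vs_def using u ysc Q by auto
      fix i j assume i: "i < length vs" and j: "j < length vs"
      hence i': "i < Suc n" and j': "j < Suc n" unfolding vs_def using lys by auto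
      show "vs ! i \<bullet> vs ! j = (if i = j then 1 else 0)"
      proof (cases i)
        case 0
        show ?thesis
        proof (cases j)
          case 0 thus ?thesis using \<open>i = 0\<close> uu unfolding vs_def by simp
        next
          case (Suc j2) with j' have "j2 < n" by auto
          thus ?thesis using \<open>i = 0\<close> Suc uQ[OF ysi] lys unfolding vs_def by auto
        qed
      next
        case (Suc i2) with i' have i2: "i2 < n" by auto
        show ?thesis
        proof (cases j)
          case 0 thus ?thesis using Suc i2 Qu[OF ysi] lys unfolding vs_def by auto
        next
          case (Suc j2) with j' have j2: "j2 < n" by auto
          have "vs ! i \<bullet> vs ! j = ys ! i2 \<bullet> ys ! j2"
            unfolding vs_def \<open>i = Suc i2\<close> Suc using i2 j2 lys Qprod[OF ysi ysi] by auto
          thus ?thesis using oys i2 j2 lys \<open>i = Suc i2\<close> Suc unfolding orthonormal_def by auto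
        qed
      qed
    qed
  qed
qed


definition diagm :: "real list \<Rightarrow> real mat" where
  "diagm es = mat (length es) (length es) (\<lambda>(i,j). if i = j then es ! i else 0)"

lemma order_prod_linear:
  "order (a::real) (\<Prod>e\<leftarrow>es. [:-e,1:]) = count_list es a"
proof (induction es)
  case Nil thus ?case by (simp add: order_0I)
next
  case (Cons x xs)
  have nz: "(\<Prod>e\<leftarrow>xs. [:-e,1:]) \<noteq> (0 :: real poly)"
    by (auto simp: prod_list_zero_iff)
  have nz1: "[:-x,1:] \<noteq> (0 :: real poly)" by simp
  have nz2: "[:-x,1:] * (\<Prod>e\<leftarrow>xs. [:-e,1:]) \<noteq> (0 :: real poly)"
    using no_zero_divisors[OF nz1 nz] .
  have "order a (\<Prod>e\<leftarrow>x # xs. [:-e,1:]) = order a ([:-x,1:] * (\<Prod>e\<leftarrow>xs. [:-e,1:]))" by simp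
  also have "\<dots> = order a [:-x,1:] + order a (\<Prod>e\<leftarrow>xs. [:-e,1:])"
    by (rule order_mult[OF nz2])
  also have "order a [:-x,1:] = (if x = a then 1 else 0)"
  proof (cases "x = a")
    case True thus ?thesis using order_power_n_n[of a 1] by simp
  next
    case False
    have "poly [:-x,1:] a \<noteq> 0" using False by simp
    hence "order a [:-x,1:] = 0" by (rule order_0I)
    thus ?thesis using False by simp
  qed
  finally show ?case using Cons by simp
qed

lemma sum_count_list:
  assumes "finite T" "set xs \<subseteq> T"
  shows "(\<Sum>a\<in>{a\<in>T. P a}. count_list xs a) = length (filter P xs)"
  using assms(2)
proof (induction xs)
  case Nil thus ?case by simp
next
  case (Cons x xs)
  have fin: "finite {a\<in>T. P a}" using assms(1) by auto
  have "(\<Sum>a\<in>{a\<in>T. P a}. count_list (x # xs) a) =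
        (\<Sum>a\<in>{a\<in>T. P a}. (if x = a then 1 else 0) + count_list xs a)"
    by (rule sum.cong, auto)
  also have "\<dots> = (\<Sum>a\<in>{a\<in>T. P a}. (if x = a then 1 else 0)) + (\<Sum>a\<in>{a\<in>T. P a}. count_list xs a)"
    by (rule sum.distrib)
  also have "(\<Sum>a\<in>{a\<in>T. P a}. (if x = a then 1 else 0)) = (if P x then 1 else (0::nat))"
    using Cons.prems fin by (simp add: sum.delta)
  finally show ?case using Cons by simp
qed

lemma spectral_AP:
  fixes A :: "real mat"
  assumes A: "A \<in> carrier_mat n n" and o: "orthonormal n vs" and lvs: "length vs = n"
    and les: "length es = n" and eig: "\<forall>i<n. A *\<^sub>v (vs ! i) = (es ! i) \<cdot>\<^sub>v (vs ! i)"
  shows "A * mat_of_cols n vs = mat_of_cols n vs * diagm es"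
proof (rule eq_matI)
  have vsi: "vs ! i \<in> carrier_vec n" if "i < n" for i
    using o nth_mem[of i vs] that lvs unfolding orthonormal_def by auto
  fix r i assume "r < dim_row (mat_of_cols n vs * diagm es)" "i < dim_col (mat_of_cols n vs * diagm es)"
  hence r: "r < n" and i: "i < n" using lvs les by (auto simp: diagm_def)
  have "(A * mat_of_cols n vs) $$ (r, i) = row A r \<bullet> vs ! i" using A r i lvs vsi by auto
  also have "\<dots> = (A *\<^sub>v vs ! i) $ r" using A r by auto
  also have "\<dots> = es ! i * vs ! i $ r" using eig i r vsi[OF i] by auto
  finally have l: "(A * mat_of_cols n vs) $$ (r, i) = es ! i * vs ! i $ r" .
  have "(mat_of_cols n vs * diagm es) $$ (r, i) = (\<Sum>j\<in>{0..<n}. vs ! j $ r * (if j = i then es ! i else 0))"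
    using r i lvs les
    by (auto simp: diagm_def scalar_prod_def mat_of_cols_def row_def col_def intro!: sum.cong)
  also have "\<dots> = (\<Sum>j\<in>{0..<n}. if j = i then vs ! i $ r * es ! i else 0)"
    by (rule sum.cong, auto)
  also have "\<dots> = vs ! i $ r * es ! i" using i by (simp add: sum.delta')
  finally show "(A * mat_of_cols n vs) $$ (r, i) = (mat_of_cols n vs * diagm es) $$ (r, i)"
    using l by simp
qed (insert A lvs les, auto simp: diagm_def)

lemma spectral_char_poly:
  fixes A :: "real mat"
  assumes A: "A \<in> carrier_mat n n" and o: "orthonormal n vs" and lvs: "length vs = n"
    and les: "length es = n" and eig: "\<forall>i<n. A *\<^sub>v (vs ! i) = (es ! i) \<cdot>\<^sub>v (vs ! i)"
  shows "char_poly A = (\<Prod>e\<leftarrow>es. [:-e,1:])"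
proof -
  define P where "P = mat_of_cols n vs"
  define D where "D = diagm es"
  have P: "P \<in> carrier_mat n n" unfolding P_def using lvs by auto
  have D: "D \<in> carrier_mat n n" unfolding D_def diagm_def using les by auto
  have AP: "A * P = P * D" unfolding P_def D_def by (rule spectral_AP[OF assms])
  have PT: "P * P\<^sup>T = 1\<^sub>m n" "P\<^sup>T * P = 1\<^sub>m n" unfolding P_def using orthonormal_square[OF o lvs] by auto
  have "A = A * (P * P\<^sup>T)" using A PT by simp
  also have "\<dots> = (A * P) * P\<^sup>T" using A P by (simp add: assoc_mult_mat[of _ n n _ n _ n])
  also have "\<dots> = P * D * P\<^sup>T" unfolding AP ..
  finally have "A = P * D * P\<^sup>T" .
  hence "similar_mat_wit A D P P\<^sup>T" unfolding similar_mat_wit_def Let_def using A P D PT by auto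
  hence "similar_mat A D" unfolding similar_mat_def by blast
  hence "char_poly A = char_poly D" by (rule char_poly_similar)
  also have "char_poly D = (\<Prod>a\<leftarrow>diag_mat D. [:-a,1:])"
    by (rule char_poly_upper_triangular[OF D], auto simp: upper_triangular_def D_def diagm_def)
  also have "diag_mat D = es" unfolding diag_mat_def D_def diagm_def
    by (rule nth_equalityI, auto)
  finally show ?thesis .
qed

lemma num_nonpos_spectral:
  fixes A :: "real mat"
  assumes A: "A \<in> carrier_mat n n" and cp: "char_poly A = (\<Prod>e\<leftarrow>es. [:-e,1:])"
  shows "num_nonpos_eigenvalues A = length (filter (\<lambda>e. e \<le> 0) es)"
proof -
  have ev: "eigenvalue A a \<longleftrightarrow> a \<in> set es" for a
  proof -
    have nz: "(\<Prod>e\<leftarrow>es. [:-e,1:]) \<noteq> (0 :: real poly)" by (auto simp: prod_list_zero_iff)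
    show ?thesis unfolding eigenvalue_root_char_poly[OF A] cp order_root
      using nz by (simp add: order_prod_linear count_list_0_iff)
  qed
  have "{a. eigenvalue A a \<and> a \<le> 0} = {a\<in>set es. a \<le> 0}" using ev by auto
  thus ?thesis unfolding num_nonpos_eigenvalues_def cp order_prod_linear
    by (simp add: sum_count_list)
qed


lemma count_bound:
  fixes A :: "real mat"
  assumes A: "A \<in> carrier_mat n n" and o: "orthonormal n vs" and lvs: "length vs = n"
    and les: "length es = n" and eig: "\<forall>i<n. A *\<^sub>v (vs ! i) = (es ! i) \<cdot>\<^sub>v (vs ! i)"
    and rs: "set rs \<subseteq> carrier_vec n"
    and neg: "\<forall>x\<in>carrier_vec n. (\<forall>r\<in>set rs. r \<bullet> x = 0) \<longrightarrow> x \<bullet> (A *\<^sub>v x) \<le> 0"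
  shows "n \<le> length rs + length (filter (\<lambda>e. e \<le> 0) es)"
proof (rule ccontr)
  assume contra: "\<not> ?thesis"
  have vsi: "vs ! i \<in> carrier_vec n" if "i < n" for i
    using o nth_mem[of i vs] that lvs unfolding orthonormal_def by auto
  define J where "J = filter (\<lambda>i. es ! i \<le> 0) [0..<n]"
  have "es = map (\<lambda>i. es ! i) [0..<n]" using les map_nth[of es] by simp
  then have "length (filter (\<lambda>e. e \<le> 0) es) = length J" 
  proof -
    assume e: "es = map (\<lambda>i. es ! i) [0..<n]"
    have "length (filter (\<lambda>e. e \<le> 0) es) = length (filter (\<lambda>e. e \<le> 0) (map (\<lambda>i. es ! i) [0..<n]))"
      using e by simp
    also have "\<dots> = length (filter (\<lambda>i. es ! i \<le> 0) [0..<n])"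
      unfolding filter_map by (simp add: o_def)
    finally show ?thesis by (simp add: J_def)
  qed
  define cs where "cs = rs @ map (\<lambda>i. vs ! i) J"
  have cs: "set cs \<subseteq> carrier_vec n" unfolding cs_def J_def using rs vsi by auto
  have lcs: "length cs < n" unfolding cs_def using contra \<open>length _ = length J\<close> by auto
  from exists_orth[OF cs lcs] obtain x where x: "x \<in> carrier_vec n" "x \<noteq> 0\<^sub>v n"
    and xo: "\<forall>r\<in>set cs. r \<bullet> x = 0" by auto
  have xneg: "x \<bullet> (A *\<^sub>v x) \<le> 0" using neg x xo unfolding cs_def by auto
  define P where "P = mat_of_cols n vs"
  define D where "D = diagm es"
  have P: "P \<in> carrier_mat n n" unfolding P_def using lvs by auto
  have D: "D \<in> carrier_mat n n" unfolding D_def diagm_def using les by auto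
  have AP: "A * P = P * D" unfolding P_def D_def by (rule spectral_AP[OF A o lvs les eig])
  have PT: "P * P\<^sup>T = 1\<^sub>m n" "P\<^sup>T * P = 1\<^sub>m n" unfolding P_def using orthonormal_square[OF o lvs] by auto
  define y where "y = P\<^sup>T *\<^sub>v x"
  have y: "y \<in> carrier_vec n" unfolding y_def using P x by auto
  have yi: "y $ i = vs ! i \<bullet> x" if "i < n" for i
    unfolding y_def P_def transpose_mat_of_cols using that lvs vsi by auto
  have xy: "x = P *\<^sub>v y"
  proof -
    have "P *\<^sub>v y = (P * P\<^sup>T) *\<^sub>v x" unfolding y_def
      by (rule assoc_mult_mat_vec[symmetric, of _ n n], insert P x, auto)
    thus ?thesis using PT x by simp
  qed
  have PTP: "P\<^sup>T *\<^sub>v (P *\<^sub>v w) = w" if "w \<in> carrier_vec n" for w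
  proof -
    have "P\<^sup>T *\<^sub>v (P *\<^sub>v w) = (P\<^sup>T * P) *\<^sub>v w"
      by (rule assoc_mult_mat_vec[symmetric, of _ n n], insert P that, auto)
    thus ?thesis using PT that by simp
  qed
  have Dy: "D *\<^sub>v y \<in> carrier_vec n" using D y by auto
  have Ax: "A *\<^sub>v x = P *\<^sub>v (D *\<^sub>v y)"
  proof -
    have "A *\<^sub>v x = (A * P) *\<^sub>v y" unfolding xy
      by (rule assoc_mult_mat_vec[symmetric, of _ n n], insert A P y, auto)
    also have "\<dots> = P *\<^sub>v (D *\<^sub>v y)" unfolding AP
      by (rule assoc_mult_mat_vec[of _ n n], insert D P y, auto)
    finally show ?thesis .
  qed
  have Py: "P *\<^sub>v y \<in> carrier_vec n" using P y by auto
  have q: "x \<bullet> (A *\<^sub>v x) = y \<bullet> (D *\<^sub>v y)"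
  proof -
    have "x \<bullet> (A *\<^sub>v x) = (P *\<^sub>v y) \<bullet> (P *\<^sub>v (D *\<^sub>v y))" unfolding Ax by (simp only: xy[symmetric])
    also have "\<dots> = (P\<^sup>T *\<^sub>v (P *\<^sub>v y)) \<bullet> (D *\<^sub>v y)"
      by (rule scalar_prod_mat_vec_transpose[OF P Py Dy])
    finally show ?thesis using PTP[OF y] by simp
  qed
  have nn: "x \<bullet> x = y \<bullet> y"
  proof -
    have "x \<bullet> x = (P *\<^sub>v y) \<bullet> (P *\<^sub>v y)" by (simp only: xy[symmetric])
    also have "\<dots> = (P\<^sup>T *\<^sub>v (P *\<^sub>v y)) \<bullet> y"
      by (rule scalar_prod_mat_vec_transpose[OF P Py y])
    finally show ?thesis using PTP[OF y] by simp
  qed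
  have "y \<noteq> 0\<^sub>v n"
  proof
    assume "y = 0\<^sub>v n"
    hence "x \<bullet> x = 0" using nn by simp
    with self_scalar_pos[OF x] show False by simp
  qed
  then obtain i where i: "i < n" "y $ i \<noteq> 0"
    using y by (metis carrier_vecD eq_vecI index_zero_vec(1) index_zero_vec(2))
  have ynz: "es ! j > 0" if "j < n" "y $ j \<noteq> 0" for j
  proof (rule ccontr)
    assume "\<not> es ! j > 0"
    hence "j \<in> set J" unfolding J_def using that by auto
    hence "vs ! j \<in> set cs" unfolding cs_def by auto
    hence "y $ j = 0" using xo yi[OF that(1)] by auto
    with that show False by simp
  qed
  have Dyi: "(D *\<^sub>v y) $ j = es ! j * y $ j" if "j < n" for j
  proof -
    have "(D *\<^sub>v y) $ j = (\<Sum>l\<in>{0..<n}. (if j = l then es ! j else 0) * y $ l)"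
      using that D y les by (auto simp: D_def diagm_def scalar_prod_def row_def intro!: sum.cong)
    also have "\<dots> = (\<Sum>l\<in>{0..<n}. if l = j then es ! j * y $ j else 0)"
      by (rule sum.cong, auto)
    also have "\<dots> = es ! j * y $ j" using that by (simp add: sum.delta')
    finally show ?thesis .
  qed
  have "y \<bullet> (D *\<^sub>v y) = (\<Sum>j\<in>{0..<n}. y $ j * (D *\<^sub>v y) $ j)"
    unfolding scalar_prod_def carrier_vecD[OF Dy] ..
  also have "\<dots> = (\<Sum>j\<in>{0..<n}. y $ j * (es ! j * y $ j))"
    by (rule sum.cong, auto simp: Dyi)
  also have "\<dots> > 0"
  proof (rule sum_pos2[of _ i])
    have e1: "y $ i * (es ! i * y $ i) = es ! i * (y $ i * y $ i)" by (simp add: mult_ac)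
    have e2: "y $ i * y $ i > 0" using i(2) by (metis not_real_square_gt_zero)
    show "y $ i * (es ! i * y $ i) > 0" unfolding e1 using ynz[OF i] e2 by (rule mult_pos_pos)
    fix j assume "j \<in> {0..<n}"
    thus "0 \<le> y $ j * (es ! j * y $ j)"
    proof (cases "y $ j = 0")
      case False
      have e1: "y $ j * (es ! j * y $ j) = es ! j * (y $ j * y $ j)" by (simp add: mult_ac)
      have "es ! j > 0" using ynz[of j] False \<open>j \<in> {0..<n}\<close> by auto
      thus ?thesis unfolding e1 by simp
    qed simp
  qed (insert i, auto)
  finally show False using q xneg by simp
qed


lemma graph_nonpos:
  assumes sg: "simple_graph m E"
    and hyp: "(\<exists>S. independent_set m E S \<and> card S = k) \<or> (\<exists>S. Defs.clique m E S \<and> card S = k + 1)"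
  shows "k \<le> num_nonpos_eigenvalues (adj_matrix m E)"
proof -
  define A where "A = adj_matrix m E"
  have A: "A \<in> carrier_mat m m" unfolding A_def adj_matrix_def by auto
  have Aij: "A $$ (i,j) = (if E i j then 1 else 0)" if "i < m" "j < m" for i j
    unfolding A_def adj_matrix_def using that by auto
  have sym: "A\<^sup>T = A"
    by (rule eq_matI, insert A sg, auto simp: Aij simple_graph_def)
  obtain vs es where o: "orthonormal m vs" and lvs: "length vs = m" and les: "length es = m"
    and eig: "\<forall>i<m. A *\<^sub>v (vs ! i) = (es ! i) \<cdot>\<^sub>v (vs ! i)"
    using spectral[OF A sym] by auto
  have np: "num_nonpos_eigenvalues A = length (filter (\<lambda>e. e \<le> 0) es)"
    by (rule num_nonpos_spectral[OF A spectral_char_poly[OF A o lvs les eig]])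
  have qf: "x \<bullet> (A *\<^sub>v x) = (\<Sum>i\<in>{0..<m}. \<Sum>j\<in>{0..<m}. x $ i * A $$ (i,j) * x $ j)"
    if x: "x \<in> carrier_vec m" for x
    using x A by (auto simp: scalar_prod_def mult_mat_vec_def row_def sum_distrib_left mult.assoc intro!: sum.cong)
  define U :: "nat set \<Rightarrow> real vec list" where "U S = map (\<lambda>j. unit_vec m j) (filter (\<lambda>j. j \<notin> S) [0..<m])" for S
  have Uc: "set (U S) \<subseteq> carrier_vec m" for S unfolding U_def by auto
  have lU: "length (U S) = m - card S" if "S \<subseteq> {0..<m}" for S
  proof -
    have "length (U S) = length (filter (\<lambda>j. j \<notin> S) [0..<m])" unfolding U_def by simp
    also have "\<dots> = card (set (filter (\<lambda>j. j \<notin> S) [0..<m]))"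
      by (rule distinct_card[symmetric], simp)
    also have "set (filter (\<lambda>j. j \<notin> S) [0..<m]) = {0..<m} - S" by auto
    also have "card ({0..<m} - S) = m - card S" using that by (simp add: card_Diff_subset finite_subset)
    finally show ?thesis .
  qed
  have Uz: "x $ j = 0" if "x \<in> carrier_vec m" "\<forall>r\<in>set (U S). r \<bullet> x = 0" "j < m" "j \<notin> S" for x S j
  proof -
    have "unit_vec m j \<in> set (U S)" unfolding U_def using that by auto
    hence "unit_vec m j \<bullet> x = 0" using that by auto
    thus ?thesis using that by simp
  qed
  have cardS: "card S \<le> m" if "S \<subseteq> {0..<m}" for S
    using card_mono[OF _ that] by simp
  from hyp show ?thesis
  proof
    assume "\<exists>S. independent_set m E S \<and> card S = k"
    then obtain S where S: "independent_set m E S" "card S = k" by auto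
    have Ssub: "S \<subseteq> {0..<m}" using S unfolding independent_set_def by auto
    have neg: "\<forall>x\<in>carrier_vec m. (\<forall>r\<in>set (U S). r \<bullet> x = 0) \<longrightarrow> x \<bullet> (A *\<^sub>v x) \<le> 0"
    proof (intro ballI impI)
      fix x :: "real vec" assume x: "x \<in> carrier_vec m" and xr: "\<forall>r\<in>set (U S). r \<bullet> x = 0"
      have tz: "x $ i * A $$ (i,j) * x $ j = 0" if "i < m" "j < m" for i j
      proof (cases "i \<in> S \<and> j \<in> S")
        case True thus ?thesis using S that unfolding independent_set_def by (auto simp: Aij)
      next
        case False thus ?thesis using Uz[OF x xr] that by auto
      qed
      have "x \<bullet> (A *\<^sub>v x) = 0" unfolding qf[OF x]
        by (intro sum.neutral ballI, simp add: tz)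
      thus "x \<bullet> (A *\<^sub>v x) \<le> 0" by simp
    qed
    from count_bound[OF A o lvs les eig Uc neg] lU[OF Ssub] cardS[OF Ssub] S(2)
    show ?thesis unfolding A_def[symmetric] np by linarith
  next
    assume "\<exists>S. Defs.clique m E S \<and> card S = k + 1"
    then obtain S where S: "Defs.clique m E S" "card S = k + 1" by auto
    have Ssub: "S \<subseteq> {0..<m}" using S unfolding Defs.clique_def by auto
    define w where "w = vec m (\<lambda>j. if j \<in> S then 1 else 0 :: real)"
    define rs where "rs = U S @ [w]"
    have rsc: "set rs \<subseteq> carrier_vec m" unfolding rs_def w_def using Uc by auto
    have neg: "\<forall>x\<in>carrier_vec m. (\<forall>r\<in>set rs. r \<bullet> x = 0) \<longrightarrow> x \<bullet> (A *\<^sub>v x) \<le> 0"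
    proof (intro ballI impI)
      fix x :: "real vec" assume x: "x \<in> carrier_vec m" and xr: "\<forall>r\<in>set rs. r \<bullet> x = 0"
      have xz: "x $ j = 0" if "j < m" "j \<notin> S" for j
        using Uz[OF x _ that] xr unfolding rs_def by auto
      have "w \<bullet> x = 0" using xr unfolding rs_def by auto
      moreover have "w \<bullet> x = (\<Sum>j\<in>{0..<m}. x $ j)"
        unfolding w_def scalar_prod_def using x xz by (auto intro!: sum.cong)
      ultimately have sum0: "(\<Sum>j\<in>{0..<m}. x $ j) = 0" by simp
      have tm: "x $ i * A $$ (i,j) * x $ j = x $ i * x $ j - (if i = j then x $ i * x $ j else 0)"
        if "i < m" "j < m" for i j
      proof (cases "i \<in> S \<and> j \<in> S")
        case True
        show ?thesis
        proof (cases "i = j")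
          case True thus ?thesis using sg that unfolding simple_graph_def by (auto simp: Aij)
        next
          case False thus ?thesis using S(1) \<open>i \<in> S \<and> j \<in> S\<close> that
            unfolding Defs.clique_def by (auto simp: Aij)
        qed
      next
        case False thus ?thesis using xz that by auto
      qed
      have "x \<bullet> (A *\<^sub>v x) = (\<Sum>i\<in>{0..<m}. \<Sum>j\<in>{0..<m}. x $ i * x $ j - (if i = j then x $ i * x $ j else 0))"
        unfolding qf[OF x] by (rule sum.cong[OF refl], rule sum.cong[OF refl], auto simp: tm)
      also have "\<dots> = (\<Sum>i\<in>{0..<m}. x $ i * (\<Sum>j\<in>{0..<m}. x $ j) - x $ i * x $ i)"
        by (rule sum.cong[OF refl], subst sum_subtractf, simp add: sum_distrib_left)
      also have "\<dots> = - (\<Sum>i\<in>{0..<m}. x $ i * x $ i)" unfolding sum0 by (simp add: sum_negf)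
      also have "\<dots> \<le> 0" by (simp add: sum_nonneg)
      finally show "x \<bullet> (A *\<^sub>v x) \<le> 0" .
    qed
    have "length rs = m - card S + 1" unfolding rs_def using lU[OF Ssub] by simp
    with count_bound[OF A o lvs les eig rsc neg] cardS[OF Ssub] S(2)
    show ?thesis unfolding A_def[symmetric] np by linarith
  qed
qed


lemma ramsey_exists: "\<exists>N. ramsey_prop s t N"
proof -
  obtain r where r: "\<forall>(V::nat set) (E::nat set set). finite V \<and> r \<le> card V \<longrightarrow>
              (\<exists>R\<subseteq>V. card R = t \<and> Ramsey.clique R E \<or> card R = s \<and> indep R E)"
    using ramsey2[of t s] by auto
  have "ramsey_prop s t r"
    unfolding ramsey_prop_def
  proof (intro allI impI)
    fix m E assume m: "r \<le> m" and sg: "simple_graph m E"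
    define ES where "ES = {{i,j} | i j. E i j}"
    from r[rule_format, of "{0..<m}" ES] m obtain R where R: "R \<subseteq> {0..<m}"
      and RR: "card R = t \<and> Ramsey.clique R ES \<or> card R = s \<and> indep R ES" by auto
    have key: "E i j \<longleftrightarrow> {i,j} \<in> ES" if "i \<in> R" "j \<in> R" for i j
    proof
      assume "E i j" thus "{i,j} \<in> ES" unfolding ES_def by auto
    next
      assume "{i,j} \<in> ES"
      then obtain a b where ab: "{i,j} = {a,b}" "E a b" unfolding ES_def by auto
      have "i < m" "j < m" using that R by auto
      with ab sg show "E i j" unfolding simple_graph_def doubleton_eq_iff by auto
    qed
    from RR show "(\<exists>S. independent_set m E S \<and> card S = s) \<or> (\<exists>S. Defs.clique m E S \<and> card S = t)"
    proof
      assume "card R = t \<and> Ramsey.clique R ES"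
      hence "Defs.clique m E R \<and> card R = t" using R key
        unfolding Ramsey.clique_def Defs.clique_def by auto
      thus ?thesis by blast
    next
      assume a: "card R = s \<and> indep R ES"
      have "independent_set m E R"
        unfolding independent_set_def
      proof (intro conjI ballI)
        show "R \<subseteq> {0..<m}" by fact
        fix i j assume ij: "i \<in> R" "j \<in> R"
        show "\<not> E i j"
        proof (cases "i = j")
          case True thus ?thesis using sg ij R unfolding simple_graph_def by auto
        next
          case False thus ?thesis using a key ij unfolding indep_def by auto
        qed
      qed
      thus ?thesis using a by blast
    qed
  qed
  thus ?thesis by blast
qed

theorem mainTheorem1:
  fixes k :: nat
  assumes "k \<ge> 1"
  shows "(\<exists>n. NPO_prop k n) \<and> NPO k \<le> ramsey_number k (k + 1)"
proof -
  have rp: "ramsey_prop k (k+1) (ramsey_number k (k+1))"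
    unfolding ramsey_number_def using ramsey_exists by (rule LeastI_ex)
  have np: "NPO_prop k (ramsey_number k (k+1))"
    unfolding NPO_prop_def
  proof (intro allI impI)
    fix m E assume "ramsey_number k (k + 1) \<le> m" "simple_graph m E"
    with rp show "k \<le> num_nonpos_eigenvalues (adj_matrix m E)"
      unfolding ramsey_prop_def by (intro graph_nonpos) auto
  qed
  hence "NPO k \<le> ramsey_number k (k+1)" unfolding NPO_def by (rule Least_le)
  with np show ?thesis by blast
qed

end
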